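(* Let $(M,\omega)$ be a closed symplectic manifold, $a\in QH(M;\Lambda)$ a nonzero idempotent, $K\subset M$ compact, and $K_1\supset K_2\supset\cdots$ compact subsets of $M$ with $\bigcap_n K_n=K$. If $K_n$ is $a$-heavy (resp. $a$-superheavy) for all $n\ge1$, then $K$ is $a$-heavy (resp. $a$-superheavy).
   Context: $\Lambda$ is the Novikov field of series $\sum_{i\ge0}a_iT^{\lambda_i}$, $a_i\in\mathbb{Q}$, $\lambda_i\in\mathbb{R}$ strictly increasing to $+\infty$, valuation $\operatorname{val}$. For nonzero $a$ and nondegenerate $H:M\times S^1\to\mathbb{R}$, the spectral invariant is $c(a;H)=\max\{\operatorname{val}(x): x\in CF(H;\Lambda),dx=0,[x]=PSS^H_\Lambda(a)\}$ (Hamiltonian Floer complex over $\Lambda$ with energy-weighted differential, $PSS^H_\Lambda$ the PSS isomorphism), extended to continuous $H$ by continuity. For smooth $H:M\to\mathbb{R}$, $\mu(a;H)=\lim_n c(a;nH)/n$. A compact $K$ is $a$-heavy if $\mu(a;H)\le\max_K H$ for all $H\in C^\infty(M)$, and $a$-superheavy if $\mu(a;H)\ge\min_K H$ for all $H\in C^\infty(M)$. *)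

theory Defs
  imports "HOL-Analysis.Analysis" "HOL-Library.Extended_Real"
begin

(* Abstract heaviness relative to an asymptotic spectral invariant mu = mu(a;-),
   defined on a class Sm of (smooth) functions M -> real.
   max_K H and min_K H are taken in the extended reals, so that for K = {}
   they are -infinity / +infinity, as in the paper's convention. *)

definition heavy :: "(('a \<Rightarrow> real) \<Rightarrow> real) \<Rightarrow> ('a \<Rightarrow> real) set \<Rightarrow> 'a set \<Rightarrow> bool" where
  "heavy mu Sm K \<longleftrightarrow> (\<forall>H\<in>Sm. ereal (mu H) \<le> (SUP x\<in>K. ereal (H x)))"

definition superheavy :: "(('a \<Rightarrow> real) \<Rightarrow> real) \<Rightarrow> ('a \<Rightarrow> real) set \<Rightarrow> 'a set \<Rightarrow> bool" where
  "superheavy mu Sm K \<longleftrightarrow> (\<forall>H\<in>Sm. ereal (mu H) \<ge> (INF x\<in>K. ereal (H x)))"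

end

theory Submission
  imports Defs
begin

lemma key:
  fixes H :: "'a::t2_space \<Rightarrow> real" and Kn :: "nat \<Rightarrow> 'a set"
  assumes Hc: "continuous_on UNIV H"
    and Kn_compact: "\<And>n. compact (Kn n)"
    and Kn_decr: "\<And>n. Kn (Suc n) \<subseteq> Kn n"
    and lt: "\<And>x. x \<in> (\<Inter>n. Kn n) \<Longrightarrow> H x < c"
  shows "\<exists>N. \<forall>x\<in>Kn N. H x < c"
proof -
  define F where "F = {x. c \<le> H x}"
  have Fcl: "closed F" unfolding F_def
    using closed_Collect_le[OF continuous_on_const Hc] by simp
  have U: "compact (Kn 0 \<inter> F)"
    using compact_Int_closed[OF Kn_compact Fcl] by simp
  have cl: "\<forall>a\<in>range Kn. closed a" using Kn_compact compact_imp_closed by auto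
  have emp: "(Kn 0 \<inter> F) \<inter> \<Inter>(range Kn) = {}"
    using lt unfolding F_def by fastforce
  have "\<exists>B \<subseteq> range Kn. finite B \<and> (Kn 0 \<inter> F) \<inter> \<Inter>B = {}"
  proof (rule ccontr)
    assume "\<not> ?thesis"
    then have "\<forall>B \<subseteq> range Kn. finite B \<longrightarrow> (Kn 0 \<inter> F) \<inter> \<Inter>B \<noteq> {}" by simp
    then have "(Kn 0 \<inter> F) \<inter> \<Inter>(range Kn) \<noteq> {}"
      using compact_fip[THEN iffD1, OF U, rule_format, of "range Kn"] cl by blast
    with emp show False by simp
  qed
  then obtain B where B: "B \<subseteq> range Kn" "finite B" "(Kn 0 \<inter> F) \<inter> \<Inter>B = {}"
    by blast
  from B(1,2) obtain I where I: "finite I" "B = Kn ` I"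
    by (meson finite_subset_image)
  define N where "N = Max (insert 0 I)"
  have dec: "decseq Kn" using Kn_decr by (simp add: decseq_SucI)
  have "Kn N \<subseteq> Kn 0" using dec unfolding decseq_def by blast
  moreover have "Kn N \<subseteq> \<Inter>B"
  proof -
    have "\<And>i. i \<in> I \<Longrightarrow> Kn N \<subseteq> Kn i"
      using dec I(1) unfolding decseq_def N_def by simp
    then show ?thesis using I(2) by blast
  qed
  ultimately have "Kn N \<inter> F = {}" using B(3) by blast
  then show ?thesis unfolding F_def by force
qed

theorem lemma3p7:
  fixes mu :: "('a::t2_space \<Rightarrow> real) \<Rightarrow> real"
    and Sm :: "('a \<Rightarrow> real) set"
    and K :: "'a set" and Kn :: "nat \<Rightarrow> 'a set"
  assumes Sm_cont: "\<And>H. H \<in> Sm \<Longrightarrow> continuous_on UNIV H"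
    and K_compact: "compact K"
    and Kn_compact: "\<And>n. compact (Kn n)"
    and Kn_decr: "\<And>n. Kn (Suc n) \<subseteq> Kn n"
    and Kn_inter: "(\<Inter>n. Kn n) = K"
  shows "((\<forall>n. heavy mu Sm (Kn n)) \<longrightarrow> heavy mu Sm K)
       \<and> ((\<forall>n. superheavy mu Sm (Kn n)) \<longrightarrow> superheavy mu Sm K)"
proof (intro conjI impI)
  assume hv: "\<forall>n. heavy mu Sm (Kn n)"
  show "heavy mu Sm K" unfolding heavy_def
  proof
    fix H assume H: "H \<in> Sm"
    show "ereal (mu H) \<le> (SUP x\<in>K. ereal (H x))"
    proof (rule dense_ge)
      fix y assume y: "(SUP x\<in>K. ereal (H x)) < y"
      show "ereal (mu H) \<le> y"
      proof (cases y)
        case (real c)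
        have "\<And>x. x \<in> (\<Inter>n. Kn n) \<Longrightarrow> H x < c"
        proof -
          fix x assume "x \<in> (\<Inter>n. Kn n)"
          then have "x \<in> K" using Kn_inter by simp
          then have "ereal (H x) \<le> (SUP x\<in>K. ereal (H x))" by (rule SUP_upper)
          then have "ereal (H x) < ereal c" using y real by (metis order.strict_trans1)
          then show "H x < c" by simp
        qed
        then obtain N where N: "\<forall>x\<in>Kn N. H x < c"
          using key[where H=H and Kn=Kn and c=c, OF Sm_cont[OF H] Kn_compact Kn_decr] by blast
        have "(SUP x\<in>Kn N. ereal (H x)) \<le> ereal c"
          using N by (intro SUP_least) (simp add: less_imp_le)
        moreover have "ereal (mu H) \<le> (SUP x\<in>Kn N. ereal (H x))"
          using hv H unfolding heavy_def by blast
        ultimately show ?thesis using real by (metis order.trans)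
      qed (use y in auto)
    qed
  qed
next
  assume hv: "\<forall>n. superheavy mu Sm (Kn n)"
  show "superheavy mu Sm K" unfolding superheavy_def
  proof
    fix H assume H: "H \<in> Sm"
    show "ereal (mu H) \<ge> (INF x\<in>K. ereal (H x))"
    proof (rule dense_le)
      fix y assume y: "y < (INF x\<in>K. ereal (H x))"
      show "y \<le> ereal (mu H)"
      proof (cases y)
        case (real c)
        have "\<And>x. x \<in> (\<Inter>n. Kn n) \<Longrightarrow> (\<lambda>x. - H x) x < - c"
        proof -
          fix x assume "x \<in> (\<Inter>n. Kn n)"
          then have "x \<in> K" using Kn_inter by simp
          then have "(INF x\<in>K. ereal (H x)) \<le> ereal (H x)" by (rule INF_lower)
          then have "ereal c < ereal (H x)" using y real by (metis order.strict_trans2)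
          then show "(\<lambda>x. - H x) x < - c" by simp
        qed
        moreover have "continuous_on UNIV (\<lambda>x. - H x)"
          using Sm_cont[OF H] by (intro continuous_intros)
        ultimately obtain N where N: "\<forall>x\<in>Kn N. - H x < - c"
          using key[where H="\<lambda>x. - H x" and Kn=Kn and c="-c", OF _ Kn_compact Kn_decr] by blast
        have "ereal c \<le> (INF x\<in>Kn N. ereal (H x))"
          using N by (intro INF_greatest) (simp add: less_imp_le)
        moreover have "(INF x\<in>Kn N. ereal (H x)) \<le> ereal (mu H)"
          using hv H unfolding superheavy_def by blast
        ultimately show ?thesis using real by (metis order.trans)
      qed (use y in auto)
    qed
  qed
qed

end
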